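(* Let $S$ be a commutative ring, $\delta\in S$, and $r,s\ge0$. (1) If $r\ge1$, then $B_{r,s+1}(S,\delta)\,e_{1,r+s+1}=\iota(B_{r,s}(S,\delta))\,e_{1,r+s+1}$. (2) If $s\ge1$, then $B_{r+1,s}(S,\delta)\,e_{1,r+s+1}=\iota'(B_{r,s}(S,\delta))\,e_{1,r+s+1}$.
   Context: Brauer diagrams and the Brauer algebra $B_m(S,\delta)$: an $(m,m)$-Brauer diagram is a perfect matching of top points $\mathbf p_1,\dots,\mathbf p_m$ and bottom points $\bar{\mathbf p}_1,\dots,\bar{\mathbf p}_m$; $B_m(S,\delta)$ is the free $S$-module on such diagrams with product $ab=\delta^kc$, $c$ obtained by stacking $b$ over $a$ and deleting the $k$ closed loops formed. The walled Brauer algebra $B_{r,s}(S,\delta)\subseteq B_{r+s}(S,\delta)$ is the span of those diagrams in which, calling the points with index $\le r$ "left" and the others "right", no strand joins a top and a bottom point on different sides, and every strand joining two top points or two bottom points joins a left point with a right point. $\iota:B_{r,s}\to B_{r,s+1}$ adds a strand joining $\mathbf p_{r+s+1}$ and $\bar{\mathbf p}_{r+s+1}$; $\iota':B_{r,s}\to B_{r+1,s}$ adds a new leftmost strand joining new points $\mathbf p_1,\bar{\mathbf p}_1$ (shifting the indices of all other points by $1$). $e_{a,b}$ denotes the Brauer diagram joining $\mathbf p_a$ with $\mathbf p_b$, $\bar{\mathbf p}_a$ with $\bar{\mathbf p}_b$, and $\mathbf p_j$ with $\bar{\mathbf p}_j$ for all $j\ne a,b$. *)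

theory Defs
  imports Main
begin

text \<open>Points: Top i is the top point p_i, Bot i the bottom point p-bar_i (indices 1..m).\<close>
datatype pt = Top nat | Bot nat

fun idx :: "pt \<Rightarrow> nat" where
  "idx (Top i) = i" | "idx (Bot i) = i"

fun is_top :: "pt \<Rightarrow> bool" where
  "is_top (Top i) = True" | "is_top (Bot i) = False"

definition pts :: "nat \<Rightarrow> pt set" where
  "pts m = {p. 1 \<le> idx p \<and> idx p \<le> m}"

text \<open>A diagram is a perfect matching on pts m, encoded as a fixed-point-free
  involution on pts m, extended by the identity outside pts m.\<close>
type_synonym diagram = "pt \<Rightarrow> pt"

definition brauer :: "nat \<Rightarrow> diagram set" where
  "brauer m = {d. (\<forall>p\<in>pts m. d p \<in> pts m \<and> d p \<noteq> p \<and> d (d p) = p)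
                  \<and> (\<forall>p. p \<notin> pts m \<longrightarrow> d p = p)}"

text \<open>Three layers of points: upper (top of b), middle (bottom of b = top of a),
  lower (bottom of a).\<close>
datatype lpt = Up nat | Mid nat | Lo nat

fun emb_upper :: "pt \<Rightarrow> lpt" where
  "emb_upper (Top i) = Up i" | "emb_upper (Bot i) = Mid i"

fun emb_lower :: "pt \<Rightarrow> lpt" where
  "emb_lower (Top i) = Mid i" | "emb_lower (Bot i) = Lo i"

fun outer :: "pt \<Rightarrow> lpt" where
  "outer (Top i) = Up i" | "outer (Bot i) = Lo i"

definition stack_edges :: "nat \<Rightarrow> diagram \<Rightarrow> diagram \<Rightarrow> (lpt \<times> lpt) set" where
  "stack_edges m a b =
     {(emb_upper p, emb_upper (b p)) | p. p \<in> pts m} \<union>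
     {(emb_lower p, emb_lower (a p)) | p. p \<in> pts m}"

definition compose :: "nat \<Rightarrow> diagram \<Rightarrow> diagram \<Rightarrow> diagram" where
  "compose m a b = (\<lambda>p. if p \<in> pts m
       then (THE q. q \<in> pts m \<and> q \<noteq> p \<and> (outer p, outer q) \<in> (stack_edges m a b)\<^sup>*)
       else p)"

text \<open>Number of closed loops: connected components consisting of middle points only.\<close>
definition loops :: "nat \<Rightarrow> diagram \<Rightarrow> diagram \<Rightarrow> nat" where
  "loops m a b = card {C. \<exists>i\<in>{1..m}. C = ((stack_edges m a b)\<^sup>*) `` {Mid i}
                                        \<and> C \<subseteq> range Mid}"

type_synonym 'a elem = "diagram \<Rightarrow> 'a"

definition brauer_alg :: "nat \<Rightarrow> ('a::comm_ring_1) elem set" where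
  "brauer_alg m = {x. \<forall>d. d \<notin> brauer m \<longrightarrow> x d = 0}"

definition basis :: "diagram \<Rightarrow> ('a::comm_ring_1) elem" where
  "basis d = (\<lambda>d'. if d' = d then 1 else 0)"

definition bmult :: "nat \<Rightarrow> 'a::comm_ring_1 \<Rightarrow> 'a elem \<Rightarrow> 'a elem \<Rightarrow> 'a elem" where
  "bmult m \<delta> x y = (\<lambda>c. \<Sum>a\<in>brauer m. \<Sum>b\<in>brauer m.
       if compose m a b = c then x a * y b * \<delta> ^ loops m a b else 0)"

definition walled :: "nat \<Rightarrow> nat \<Rightarrow> diagram set" where
  "walled r s = {d \<in> brauer (r + s). \<forall>p \<in> pts (r + s).
      (is_top p \<noteq> is_top (d p) \<longrightarrow> (idx p \<le> r \<longleftrightarrow> idx (d p) \<le> r)) \<and>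
      (is_top p = is_top (d p) \<longrightarrow> (idx p \<le> r \<longleftrightarrow> \<not> idx (d p) \<le> r))}"

definition walled_alg :: "nat \<Rightarrow> nat \<Rightarrow> ('a::comm_ring_1) elem set" where
  "walled_alg r s = {x \<in> brauer_alg (r + s). \<forall>d. x d \<noteq> 0 \<longrightarrow> d \<in> walled r s}"

definition lin_ext :: "nat \<Rightarrow> (diagram \<Rightarrow> diagram) \<Rightarrow> ('a::comm_ring_1) elem \<Rightarrow> 'a elem" where
  "lin_ext m f x = (\<lambda>d'. \<Sum>d\<in>brauer m. if f d = d' then x d else 0)"

definition ext_right :: "nat \<Rightarrow> diagram \<Rightarrow> diagram" where
  "ext_right m d = (\<lambda>p. if p = Top (m + 1) then Bot (m + 1)
                         else if p = Bot (m + 1) then Top (m + 1) else d p)"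

fun shift_up :: "pt \<Rightarrow> pt" where
  "shift_up (Top i) = Top (i + 1)" | "shift_up (Bot i) = Bot (i + 1)"

fun shift_down :: "pt \<Rightarrow> pt" where
  "shift_down (Top i) = Top (i - 1)" | "shift_down (Bot i) = Bot (i - 1)"

definition ext_left :: "diagram \<Rightarrow> diagram" where
  "ext_left d = (\<lambda>p. if p = Top 1 then Bot 1
                     else if p = Bot 1 then Top 1
                     else if 2 \<le> idx p then shift_up (d (shift_down p)) else p)"

definition iota :: "nat \<Rightarrow> nat \<Rightarrow> ('a::comm_ring_1) elem \<Rightarrow> 'a elem" where
  "iota r s = lin_ext (r + s) (ext_right (r + s))"

definition iota' :: "nat \<Rightarrow> nat \<Rightarrow> ('a::comm_ring_1) elem \<Rightarrow> 'a elem" where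
  "iota' r s = lin_ext (r + s) ext_left"

definition e_diag :: "nat \<Rightarrow> nat \<Rightarrow> nat \<Rightarrow> diagram" where
  "e_diag m a b = (\<lambda>p. if p \<notin> pts m then p
       else if p = Top a then Top b else if p = Top b then Top a
       else if p = Bot a then Bot b else if p = Bot b then Bot a
       else (case p of Top j \<Rightarrow> Bot j | Bot j \<Rightarrow> Top j))"

end

theory Submission
  imports Defs
begin


lemma pts_iff: "p \<in> pts m \<longleftrightarrow> 1 \<le> idx p \<and> idx p \<le> m" by (simp add: pts_def)

lemma Top_pts[simp]: "Top i \<in> pts m \<longleftrightarrow> 1 \<le> i \<and> i \<le> m" by (simp add: pts_def)
lemma Bot_pts[simp]: "Bot i \<in> pts m \<longleftrightarrow> 1 \<le> i \<and> i \<le> m" by (simp add: pts_def)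

lemma pts_finite: "finite (pts m)"
proof -
  have "pts m \<subseteq> Top ` {1..m} \<union> Bot ` {1..m}"
  proof
    fix p assume "p \<in> pts m" thus "p \<in> Top ` {1..m} \<union> Bot ` {1..m}" by (cases p) auto
  qed
  thus ?thesis by (rule finite_subset) auto
qed

lemma brauer_finite: "finite (brauer m)"
proof -
  let ?S = "{f. \<forall>x. (x \<in> pts m \<longrightarrow> f x \<in> pts m) \<and> (x \<notin> pts m \<longrightarrow> f x = undefined)}"
  have "brauer m \<subseteq> (\<lambda>f x. if x \<in> pts m then f x else x) ` ?S"
  proof
    fix d assume d: "d \<in> brauer m"
    let ?f = "\<lambda>x. if x \<in> pts m then d x else undefined"
    have 1: "?f \<in> ?S" using d by (auto simp: brauer_def)
    have 2: "d = (\<lambda>f x. if x \<in> pts m then f x else x) ?f" using d by (auto simp: brauer_def)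
    show "d \<in> (\<lambda>f x. if x \<in> pts m then f x else x) ` ?S" by (rule image_eqI[where f="\<lambda>f x. if x \<in> pts m then f x else x", OF 2 1])
  qed
  moreover have "finite ?S" by (rule finite_set_of_finite_funs[OF pts_finite pts_finite])
  ultimately show ?thesis using finite_subset by blast
qed



lemma brauerD:
  assumes "a \<in> brauer m"
  shows "p \<in> pts m \<Longrightarrow> a p \<in> pts m" "p \<in> pts m \<Longrightarrow> a p \<noteq> p" "a (a p) = p"
    "p \<notin> pts m \<Longrightarrow> a p = p"
proof -
  have d: "\<forall>p\<in>pts m. a p \<in> pts m \<and> a p \<noteq> p \<and> a (a p) = p" "\<forall>p. p \<notin> pts m \<longrightarrow> a p = p"
    using assms unfolding brauer_def by auto
  show "p \<in> pts m \<Longrightarrow> a p \<in> pts m" "p \<in> pts m \<Longrightarrow> a p \<noteq> p" "p \<notin> pts m \<Longrightarrow> a p = p"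
    using d by auto
  show "a (a p) = p" using d by (cases "p \<in> pts m") auto
qed

lemma brauerI:
  assumes "\<And>p. p \<in> pts m \<Longrightarrow> a p \<in> pts m" "\<And>p. p \<in> pts m \<Longrightarrow> a p \<noteq> p" "\<And>p. p \<in> pts m \<Longrightarrow> a (a p) = p"
    "\<And>p. p \<notin> pts m \<Longrightarrow> a p = p"
  shows "a \<in> brauer m"
  using assms unfolding brauer_def by blast

definition G :: "nat \<Rightarrow> diagram \<Rightarrow> diagram" where
"G m a = (\<lambda>p. if p \<notin> pts m then p else if p = Top 1 then Top m else if p = Top m then Top 1
   else if a p = Top 1 then a (Top m) else if a p = Top m then a (Top 1) else a p)"

lemma G_brauer:
  assumes m: "2 \<le> m" and a: "a \<in> brauer m"
  shows "G m a \<in> brauer m"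
proof (rule brauerI)
  note b = brauerD[OF a]
  have t1: "Top 1 \<in> pts m" "Top m \<in> pts m" "Top 1 \<noteq> Top m" using m by auto
  fix p
  show "p \<notin> pts m \<Longrightarrow> G m a p = p" by (simp add: G_def)
  assume p: "p \<in> pts m"
  show "G m a p \<in> pts m" using p t1 b by (simp add: G_def)
  show "G m a p \<noteq> p"
  proof (cases "p = Top 1 \<or> p = Top m")
    case True thus ?thesis using t1 p by (auto simp: G_def)
  next
    case False
    show ?thesis
    proof (cases "a p = Top 1")
      case True
      hence "a (Top m) \<noteq> p" using b(3)[of "Top m"] t1 by metis
      thus ?thesis using False True p by (simp add: G_def)
    next
      case n1: False
      show ?thesis
      proof (cases "a p = Top m")
        case True
        hence "a (Top 1) \<noteq> p" using b(3)[of "Top 1"] t1 by metis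
        thus ?thesis using False True n1 p by (simp add: G_def)
      next
        case False
        thus ?thesis using \<open>\<not>(p = Top 1 \<or> p = Top m)\<close> n1 p b(2)[OF p] by (simp add: G_def)
      qed
    qed
  qed
  show "G m a (G m a p) = p"
  proof (cases "p = Top 1 \<or> p = Top m")
    case True thus ?thesis using t1 p by (auto simp: G_def)
  next
    case nt: False
    show ?thesis
    proof (cases "a p = Top 1")
      case True
      have q: "a (Top m) \<noteq> Top 1" "a (Top m) \<noteq> Top m" "a (Top m) \<in> pts m" "a (a (Top m)) = Top m" "a (Top 1) = p"
        using b t1 True nt by metis+
      show ?thesis using nt True q p by (simp add: G_def)
    next
      case n1: False
      show ?thesis
      proof (cases "a p = Top m")
        case True
        have q: "a (Top 1) \<noteq> Top 1" "a (Top 1) \<noteq> Top m" "a (Top 1) \<in> pts m" "a (a (Top 1)) = Top 1" "a (Top m) = p"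
          using b t1 True nt by metis+
        show ?thesis using nt True q p n1 by (simp add: G_def)
      next
        case False
        have q: "a p \<noteq> Top 1" "a p \<noteq> Top m" "a p \<in> pts m" "a (a p) = p"
          using b p n1 False by metis+
        show ?thesis using nt q p by (simp add: G_def)
      qed
    qed
  qed
qed

lemma e_brauer: assumes "2 \<le> m" shows "e_diag m 1 m \<in> brauer m"
proof (rule brauerI)
  fix p
  show "p \<notin> pts m \<Longrightarrow> e_diag m 1 m p = p" by (simp add: e_diag_def)
  assume p: "p \<in> pts m"
  show "e_diag m 1 m p \<in> pts m" using p assms by (cases p) (auto simp: e_diag_def)
  show "e_diag m 1 m p \<noteq> p" using p assms by (cases p) (auto simp: e_diag_def)
  show "e_diag m 1 m (e_diag m 1 m p) = p" using p assms by (cases p) (auto simp: e_diag_def)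
qed



lemma se_up: "p \<in> pts m \<Longrightarrow> (emb_upper p, emb_upper (b p)) \<in> stack_edges m a b"
  unfolding stack_edges_def by blast
lemma se_lo: "p \<in> pts m \<Longrightarrow> (emb_lower p, emb_lower (a p)) \<in> stack_edges m a b"
  unfolding stack_edges_def by blast
lemma se_E: "(x,y) \<in> stack_edges m a b \<Longrightarrow>
   (\<exists>p\<in>pts m. x = emb_upper p \<and> y = emb_upper (b p)) \<or> (\<exists>p\<in>pts m. x = emb_lower p \<and> y = emb_lower (a p))"
  unfolding stack_edges_def by blast

lemma e_Top: "2 \<le> m \<Longrightarrow> 1 \<le> j \<Longrightarrow> j \<le> m \<Longrightarrow>
   e_diag m 1 m (Top j) = (if j = 1 then Top m else if j = m then Top 1 else Bot j)"
  by (auto simp: e_diag_def)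
lemma e_Bot: "2 \<le> m \<Longrightarrow> 1 \<le> j \<Longrightarrow> j \<le> m \<Longrightarrow>
   e_diag m 1 m (Bot j) = (if j = 1 then Bot m else if j = m then Bot 1 else Top j)"
  by (auto simp: e_diag_def)

definition L0 :: "nat \<Rightarrow> diagram \<Rightarrow> pt set" where
  "L0 m a = (if a (Top 1) = Top m then {} else {a (Top 1), a (Top m)})"

definition lab :: "nat \<Rightarrow> diagram \<Rightarrow> lpt \<Rightarrow> pt set" where
  "lab m a x = (case x of Up j \<Rightarrow> if j = 1 \<or> j = m then {Top 1, Top m} else {Top j, G m a (Top j)}
     | Mid j \<Rightarrow> if j = 1 \<or> j = m then L0 m a else {Top j, G m a (Top j)}
     | Lo j \<Rightarrow> {Bot j, G m a (Bot j)})"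

context
  fixes m :: nat and a :: diagram
  assumes m: "2 \<le> m" and a: "a \<in> brauer m"
begin

private abbreviation "e \<equiv> e_diag m 1 m"
private abbreviation "E \<equiv> stack_edges m a e"

private lemma b: "p \<in> pts m \<Longrightarrow> a p \<in> pts m" "p \<in> pts m \<Longrightarrow> a p \<noteq> p" "a (a p) = p"
    "p \<notin> pts m \<Longrightarrow> a p = p"
  using brauerD[OF a] by auto

private lemma t1: "Top 1 \<in> pts m" "Top m \<in> pts m" "Top 1 \<noteq> Top m" "m \<noteq> 1" using m by auto

lemma lab_lower: "p \<in> pts m \<Longrightarrow> lab m a (emb_lower p) = (if p = Top 1 \<or> p = Top m then L0 m a else {p, G m a p})"
  by (cases p) (auto simp: lab_def)

lemma lab_outer: "p \<in> pts m \<Longrightarrow> lab m a (outer p) = {p, G m a p}"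
  by (cases p) (auto simp: lab_def G_def)

lemma edge_lab: assumes "(x,y) \<in> E" shows "lab m a x = lab m a y"
proof -
  from se_E[OF assms] show ?thesis
  proof
    assume "\<exists>p\<in>pts m. x = emb_upper p \<and> y = emb_upper (e p)"
    then obtain p where p: "p \<in> pts m" "x = emb_upper p" "y = emb_upper (e p)" by blast
    show ?thesis
    proof (cases p)
      case (Top j)
      have ep: "e (Top j) = (if j = 1 then Top m else if j = m then Top 1 else Bot j)"
        using p Top m by (intro e_Top) auto
      show ?thesis unfolding p(2,3) Top ep using p Top m by (auto simp: lab_def)
    next
      case (Bot j)
      have ep: "e (Bot j) = (if j = 1 then Bot m else if j = m then Bot 1 else Top j)"
        using p Bot m by (intro e_Bot) auto
      show ?thesis unfolding p(2,3) Bot ep using p Bot m by (auto simp: lab_def)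
    qed
  next
    assume "\<exists>p\<in>pts m. x = emb_lower p \<and> y = emb_lower (a p)"
    then obtain p where p: "p \<in> pts m" "x = emb_lower p" "y = emb_lower (a p)" by blast
    have ap: "a p \<in> pts m" using b p by auto
    have lx: "lab m a x = (if p = Top 1 \<or> p = Top m then L0 m a else {p, G m a p})"
      using p lab_lower by simp
    have ly: "lab m a y = (if a p = Top 1 \<or> a p = Top m then L0 m a else {a p, G m a (a p)})"
      using p ap lab_lower by simp
    have aap: "a (a p) = p" using b by auto
    have a1m: "a (Top 1) = Top m \<longleftrightarrow> a (Top m) = Top 1" using b(3)[of "Top 1"] b(3)[of "Top m"] by metis
    show ?thesis
    proof (cases "p = Top 1 \<or> p = Top m")
      case True
      show ?thesis
      proof (cases "a p = Top 1 \<or> a p = Top m")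
        case True
        thus ?thesis using \<open>p = Top 1 \<or> p = Top m\<close> lx ly by simp
      next
        case False
        have "G m a (a p) = (if p = Top 1 then a (Top m) else a (Top 1))"
          using False ap \<open>p = Top 1 \<or> p = Top m\<close> t1 aap by (auto simp: G_def)
        thus ?thesis using True False lx ly t1 a1m by (auto simp: L0_def)
      qed
    next
      case nt: False
      show ?thesis
      proof (cases "a p = Top 1")
        case True
        have "a (Top 1) = p" using b True by metis
        moreover have "G m a p = a (Top m)" using True nt p by (simp add: G_def)
        ultimately show ?thesis using True nt lx ly t1 by (auto simp: L0_def)
      next
        case n1: False
        show ?thesis
        proof (cases "a p = Top m")
          case True
          have "a (Top m) = p" using b True by metis
          moreover have "G m a p = a (Top 1)" using True nt p t1 by (simp add: G_def)
          moreover have "a (Top 1) \<noteq> Top m" using a1m \<open>a (Top m) = p\<close> nt by auto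
          ultimately show ?thesis using True nt lx ly t1 by (auto simp: L0_def)
        next
          case False
          have "G m a p = a p" "G m a (a p) = p" using False n1 nt p ap aap by (auto simp: G_def)
          thus ?thesis using n1 False nt lx ly by auto
        qed
      qed
    qed
  qed
qed

lemma rt_lab: assumes "(x,y) \<in> E\<^sup>*" shows "lab m a x = lab m a y"
  using assms
proof (induction rule: rtrancl_induct)
  case (step y z)
  from edge_lab[OF step(2)] step(3) show ?case by simp
qed simp

lemma e_up_edge: "j \<in> {2..<m} \<Longrightarrow> (Up j, Mid j) \<in> E \<and> (Mid j, Up j) \<in> E"
proof -
  assume j: "j \<in> {2..<m}"
  have "e (Top j) = Bot j" "e (Bot j) = Top j" using j m by (auto simp: e_diag_def)
  moreover have "Top j \<in> pts m" "Bot j \<in> pts m" using j by auto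
  ultimately show ?thesis using se_up[of "Top j" m e a] se_up[of "Bot j" m e a] by auto
qed

lemma e_cap_edges: "(Up 1, Up m) \<in> E" "(Mid 1, Mid m) \<in> E" "(Mid m, Mid 1) \<in> E"
proof -
  have "e (Top 1) = Top m" "e (Bot 1) = Bot m" "e (Bot m) = Bot 1" using m by (auto simp: e_diag_def)
  moreover have "Top 1 \<in> pts m" "Bot 1 \<in> pts m" "Bot m \<in> pts m" using m by auto
  ultimately show "(Up 1, Up m) \<in> E" "(Mid 1, Mid m) \<in> E" "(Mid m, Mid 1) \<in> E"
    using se_up[of "Top 1" m e a] se_up[of "Bot 1" m e a] se_up[of "Bot m" m e a] by auto
qed

lemma conn_outer: assumes q: "q \<in> pts m" "q \<noteq> Top 1" "q \<noteq> Top m"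
  shows "(outer q, emb_lower q) \<in> E\<^sup>*" "(emb_lower q, outer q) \<in> E\<^sup>*"
proof -
  have "(outer q, emb_lower q) \<in> E\<^sup>* \<and> (emb_lower q, outer q) \<in> E\<^sup>*"
  proof (cases q)
    case (Top j)
    hence "j \<in> {2..<m}" using q by auto
    from e_up_edge[OF this] show ?thesis using Top by auto
  next
    case (Bot j) thus ?thesis by auto
  qed
  thus "(outer q, emb_lower q) \<in> E\<^sup>*" "(emb_lower q, outer q) \<in> E\<^sup>*" by auto
qed

lemma lo_edge: "p \<in> pts m \<Longrightarrow> (emb_lower p, emb_lower (a p)) \<in> E" by (rule se_lo)

lemma path: assumes p: "p \<in> pts m" shows "(outer p, outer (G m a p)) \<in> E\<^sup>*"
proof (cases "p = Top 1 \<or> p = Top m")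
  case True
  have "(Up 1, Up m) \<in> E\<^sup>*" using e_cap_edges by auto
  moreover have "(Up m, Up 1) \<in> E\<^sup>*"
  proof -
    have "e (Top m) = Top 1" using m by (auto simp: e_diag_def)
    thus ?thesis using se_up[of "Top m" m e a] t1 by auto
  qed
  ultimately show ?thesis using True t1 by (auto simp: G_def)
next
  case nt: False
  have s0: "(outer p, emb_lower p) \<in> E\<^sup>*" using conn_outer(1)[OF p] nt by blast
  have s1: "(outer p, emb_lower (a p)) \<in> E\<^sup>*"
    using rtrancl_into_rtrancl[OF s0 lo_edge[OF p]] .
  show ?thesis
  proof (cases "a p = Top 1 \<or> a p = Top m")
    case True
    let ?o = "if a p = Top 1 then Top m else Top 1"
    have o: "?o \<in> pts m" using t1 by auto
    have e1: "(emb_lower (a p), emb_lower ?o) \<in> E" using True e_cap_edges t1 by auto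
    have e2: "(emb_lower ?o, emb_lower (a ?o)) \<in> E" using lo_edge[OF o] .
    have ao: "a ?o \<in> pts m" "a ?o \<noteq> Top 1" "a ?o \<noteq> Top m"
    proof -
      show "a ?o \<in> pts m" using b(1)[OF o] .
      have ao1: "a ?o \<noteq> ?o" using b(2)[OF o] .
      have ap: "a (a p) = p" using b(3) .
      have ao2: "a (a ?o) = ?o" using b(3) .
      have "a ?o \<noteq> a p"
      proof
        assume "a ?o = a p"
        hence "a (a ?o) = a (a p)" by simp
        hence "?o = p" using ap ao2 by simp
        thus False using nt True by (auto split: if_splits)
      qed
      thus "a ?o \<noteq> Top 1" "a ?o \<noteq> Top m" using ao1 True by (auto split: if_splits)
    qed
    have g: "G m a p = a ?o" using True nt p t1 by (auto simp: G_def)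
    have "(outer p, emb_lower (a ?o)) \<in> E\<^sup>*"
      using rtrancl_into_rtrancl[OF rtrancl_into_rtrancl[OF s1 e1] e2] .
    from rtrancl_trans[OF this conn_outer(2)[OF ao]] show ?thesis unfolding g .
  next
    case False
    have g: "G m a p = a p" using False nt p by (simp add: G_def)
    have ap: "a p \<in> pts m" "a p \<noteq> Top 1" "a p \<noteq> Top m" using False b(1)[OF p] by auto
    from rtrancl_trans[OF s1 conn_outer(2)[OF ap]] show ?thesis unfolding g .
  qed
qed

lemma compose_G: "compose m a e = G m a"
proof
  fix p
  show "compose m a e p = G m a p"
  proof (cases "p \<in> pts m")
    case False thus ?thesis by (simp add: compose_def G_def)
  next
    case True
    have Gb: "G m a \<in> brauer m" by (rule G_brauer[OF m a])
    have "(THE q. q \<in> pts m \<and> q \<noteq> p \<and> (outer p, outer q) \<in> E\<^sup>*) = G m a p"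
    proof (rule the_equality)
      show "G m a p \<in> pts m \<and> G m a p \<noteq> p \<and> (outer p, outer (G m a p)) \<in> E\<^sup>*"
        using brauerD[OF Gb] True path[OF True] by auto
    next
      fix q assume q: "q \<in> pts m \<and> q \<noteq> p \<and> (outer p, outer q) \<in> E\<^sup>*"
      hence "{p, G m a p} = {q, G m a q}" using rt_lab[of "outer p" "outer q"] lab_outer True by auto
      thus "q = G m a p" using q by (auto simp: doubleton_eq_iff)
    qed
    thus ?thesis using True by (simp add: compose_def)
  qed
qed

lemma outer_not_Mid: "outer p \<notin> range Mid" by (cases p) auto

lemma loops_G: "loops m a e = (if a (Top 1) = Top m then 1 else 0)"
proof -
  let ?R = "\<lambda>i. E\<^sup>* `` {Mid i}"
  have a1m: "a (Top 1) = Top m \<longleftrightarrow> a (Top m) = Top 1" using b(3)[of "Top 1"] b(3)[of "Top m"] by metis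
  have mid: "\<not> ?R i \<subseteq> range Mid" if "i \<in> {2..<m}" for i
    using e_up_edge[OF that] by auto
  show ?thesis
  proof (cases "a (Top 1) = Top m")
    case False
    have end1: "\<not> ?R i \<subseteq> range Mid" if i: "i = 1 \<or> i = m" for i
    proof -
      let ?t = "Top i"
      have t: "?t \<in> pts m" "emb_lower ?t = Mid i" using i t1 by auto
      have at: "a ?t \<in> pts m" "a ?t \<noteq> Top 1" "a ?t \<noteq> Top m"
        using b(1)[OF t(1)] b(2)[OF t(1)] False a1m i by auto
      have "(Mid i, outer (a ?t)) \<in> E\<^sup>*"
        using lo_edge[OF t(1)] t(2) conn_outer(2)[OF at] by (metis converse_rtrancl_into_rtrancl)
      hence "outer (a ?t) \<in> ?R i" by blast
      thus ?thesis using outer_not_Mid[of "a ?t"] by blast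
    qed
    have "{C. \<exists>i\<in>{1..m}. C = ?R i \<and> C \<subseteq> range Mid} = {}"
    proof -
      have "\<not> ?R i \<subseteq> range Mid" if "i \<in> {1..m}" for i
        using that mid end1 by (cases "i = 1 \<or> i = m") auto
      thus ?thesis by blast
    qed
    thus ?thesis using False by (simp add: loops_def)
  next
    case True
    have L0e: "L0 m a = {}" using True by (simp add: L0_def)
    have sub: "?R i \<subseteq> {Mid 1, Mid m}" if i: "i = 1 \<or> i = m" for i
    proof
      fix y assume "y \<in> ?R i"
      hence "lab m a y = lab m a (Mid i)" using rt_lab by auto
      also have "\<dots> = {}" using i L0e by (auto simp: lab_def)
      finally show "y \<in> {Mid 1, Mid m}" by (cases y) (auto simp: lab_def split: if_splits)
    qed
    have sup: "{Mid 1, Mid m} \<subseteq> ?R i" if i: "i = 1 \<or> i = m" for i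
      using i e_cap_edges by auto
    have eq: "?R i = {Mid 1, Mid m}" if "i = 1 \<or> i = m" for i using sub[OF that] sup[OF that] by blast
    have "{C. \<exists>i\<in>{1..m}. C = ?R i \<and> C \<subseteq> range Mid} = {{Mid 1, Mid m}}"
    proof (rule set_eqI, rule iffI)
      fix C assume "C \<in> {C. \<exists>i\<in>{1..m}. C = ?R i \<and> C \<subseteq> range Mid}"
      then obtain i where i: "i \<in> {1..m}" "C = ?R i" "C \<subseteq> range Mid" by blast
      have "i = 1 \<or> i = m" using mid[of i] i by (cases "i = 1 \<or> i = m") auto
      thus "C \<in> {{Mid 1, Mid m}}" using eq i by auto
    next
      fix C assume "C \<in> {{Mid 1, Mid m}}"
      thus "C \<in> {C. \<exists>i\<in>{1..m}. C = ?R i \<and> C \<subseteq> range Mid}"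
        using eq[of 1] t1 by (intro CollectI bexI[of _ 1]) auto
    qed
    thus ?thesis using True by (simp add: loops_def)
  qed
qed

end


definition chi :: "nat \<Rightarrow> pt \<Rightarrow> bool" where "chi r p = (is_top p = (idx p \<le> r))"

lemma walled_chi: "walled r s = {d \<in> brauer (r+s). \<forall>p\<in>pts (r+s). chi r (d p) \<noteq> chi r p}"
  unfolding walled_def chi_def by auto

lemma G_chi:
  assumes m: "2 \<le> m" and a: "a \<in> brauer m" and ac: "\<forall>p\<in>pts m. chi r (a p) \<noteq> chi r p"
    and c: "chi r (Top 1) \<noteq> chi r (Top m)"
  shows "\<forall>p\<in>pts m. chi r (G m a p) \<noteq> chi r p"
proof
  fix p assume p: "p \<in> pts m"
  note b = brauerD[OF a]
  have t1: "Top 1 \<in> pts m" "Top m \<in> pts m" using m by auto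
  show "chi r (G m a p) \<noteq> chi r p"
  proof (cases "p = Top 1 \<or> p = Top m")
    case True thus ?thesis using c p by (auto simp: G_def)
  next
    case nt: False
    show ?thesis
    proof (cases "a p = Top 1")
      case True
      have "G m a p = a (Top m)" using True nt p by (simp add: G_def)
      moreover have "chi r (a (Top m)) \<noteq> chi r (Top m)" using ac t1 by auto
      moreover have "chi r (a p) \<noteq> chi r p" using ac p by auto
      ultimately show ?thesis using True c by auto
    next
      case n1: False
      show ?thesis
      proof (cases "a p = Top m")
        case True
        have "G m a p = a (Top 1)" using True nt p n1 by (simp add: G_def)
        moreover have "chi r (a (Top 1)) \<noteq> chi r (Top 1)" using ac t1 by auto
        moreover have "chi r (a p) \<noteq> chi r p" using ac p by auto
        ultimately show ?thesis using True c by auto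
      next
        case False
        thus ?thesis using n1 nt p ac by (simp add: G_def)
      qed
    qed
  qed
qed

definition swp :: "nat \<Rightarrow> diagram \<Rightarrow> pt \<Rightarrow> diagram" where
  "swp m H u = (\<lambda>p. if p = Top 1 then u else if p = u then Top 1 else if p = Top m then H u
     else if p = H u then Top m else H p)"

context
  fixes m :: nat and H :: diagram and u :: pt
  assumes m: "2 \<le> m" and H: "H \<in> brauer m" and H1: "H (Top 1) = Top m"
    and u: "u \<in> pts m" "u \<noteq> Top 1" "u \<noteq> Top m"
begin

lemma swp_facts: "H (Top m) = Top 1" "H u \<in> pts m" "H u \<noteq> Top 1" "H u \<noteq> Top m" "H u \<noteq> u"
  "H (H u) = u" "Top 1 \<in> pts m" "Top m \<in> pts m" "Top 1 \<noteq> Top m"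
  using brauerD[OF H] H1 u m by (metis Top_pts le_trans one_le_numeral pt.inject(1) numeral_One One_nat_def
     Suc_1 not_less_eq_eq)+

private lemma Hinj: "H p = H q \<Longrightarrow> p = q" using brauerD(3)[OF H] by metis

private lemma Hother: assumes "p \<noteq> Top 1" "p \<noteq> u" "p \<noteq> Top m" "p \<noteq> H u"
  shows "H p \<noteq> Top 1" "H p \<noteq> u" "H p \<noteq> Top m" "H p \<noteq> H u"
proof -
  note f = swp_facts
  show "H p \<noteq> Top 1" using assms(3) Hinj[of p "Top m"] f(1) by auto
  show "H p \<noteq> Top m" using assms(1) Hinj[of p "Top 1"] H1 by auto
  show "H p \<noteq> u" using assms(4) Hinj[of p "H u"] f(6) by auto
  show "H p \<noteq> H u" using assms(2) Hinj[of p u] by auto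
qed

lemma sv: "swp m H u (Top 1) = u" "swp m H u u = Top 1" "swp m H u (Top m) = H u"
  "swp m H u (H u) = Top m"
  "p \<noteq> Top 1 \<Longrightarrow> p \<noteq> u \<Longrightarrow> p \<noteq> Top m \<Longrightarrow> p \<noteq> H u \<Longrightarrow> swp m H u p = H p"
  using swp_facts u unfolding swp_def by auto

lemma swp_brauer: "swp m H u \<in> brauer m"
proof (rule brauerI)
  note f = swp_facts
  note b = brauerD[OF H]
  fix p
  show "p \<notin> pts m \<Longrightarrow> swp m H u p = p" using f u b by (auto simp: swp_def)
  assume p: "p \<in> pts m"
  have "swp m H u p \<in> pts m \<and> swp m H u p \<noteq> p \<and> swp m H u (swp m H u p) = p"
  proof (cases "p = Top 1 \<or> p = u \<or> p = Top m \<or> p = H u")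
    case True thus ?thesis using sv f u by auto
  next
    case False
    hence o: "p \<noteq> Top 1" "p \<noteq> u" "p \<noteq> Top m" "p \<noteq> H u" by auto
    show ?thesis using sv(5)[OF o] sv(5)[OF Hother[OF o]] b(1)[OF p] b(2)[OF p] b(3)[of p] by simp
  qed
  thus "swp m H u p \<in> pts m" "swp m H u p \<noteq> p" "swp m H u (swp m H u p) = p" by auto
qed

lemma swp_Top1: "swp m H u (Top 1) \<noteq> Top m" using u by (simp add: swp_def)

lemma G_swp: "G m (swp m H u) = H"
proof
  note f = swp_facts
  note b = brauerD[OF H]
  fix p
  show "G m (swp m H u) p = H p"
  proof (cases "p \<in> pts m")
    case False thus ?thesis using b by (simp add: G_def)
  next
    case p: True
    show ?thesis
    proof (cases "p = Top 1 \<or> p = Top m")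
      case True thus ?thesis using f H1 by (auto simp: G_def)
    next
      case nt: False
      show ?thesis
      proof (cases "p = u")
        case True thus ?thesis using nt p sv f u by (auto simp: G_def)
      next
        case nu: False
        show ?thesis
        proof (cases "p = H u")
          case True thus ?thesis using nt p sv f u by (auto simp: G_def)
        next
          case False
          hence o: "p \<noteq> Top 1" "p \<noteq> u" "p \<noteq> Top m" "p \<noteq> H u" using nt nu by auto
          show ?thesis using sv(5)[OF o] Hother[OF o] p o by (simp add: G_def)
        qed
      qed
    qed
  qed
qed

lemma swp_chi:
  assumes Hc: "\<forall>p\<in>pts m. chi r (H p) \<noteq> chi r p" and c: "chi r (Top 1) \<noteq> chi r (Top m)"
    and cu: "chi r u \<noteq> chi r (Top 1)"
  shows "\<forall>p\<in>pts m. chi r (swp m H u p) \<noteq> chi r p"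
proof
  note f = swp_facts
  fix p assume p: "p \<in> pts m"
  have hu: "chi r (H u) \<noteq> chi r u" using Hc u by auto
  show "chi r (swp m H u p) \<noteq> chi r p"
  proof (cases "p = Top 1 \<or> p = u \<or> p = Top m \<or> p = H u")
    case True thus ?thesis using sv hu c cu by auto
  next
    case False
    hence o: "p \<noteq> Top 1" "p \<noteq> u" "p \<noteq> Top m" "p \<noteq> H u" by auto
    show ?thesis using sv(5)[OF o] Hc p by simp
  qed
qed

end


definition restr :: "nat \<Rightarrow> diagram \<Rightarrow> diagram" where
  "restr M b = (\<lambda>p. if p \<in> pts M then b p else p)"

lemma pts_Suc: "p \<in> pts (Suc M) \<longleftrightarrow> p \<in> pts M \<or> p = Top (Suc M) \<or> p = Bot (Suc M)"
  by (cases p) (auto simp: pts_def)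

lemma ext_right_brauer: assumes d: "d \<in> brauer M" shows "ext_right M d \<in> brauer (Suc M)"
proof (rule brauerI)
  note b = brauerD[OF d]
  have n: "Top (M+1) \<notin> pts M" "Bot (M+1) \<notin> pts M" by auto
  fix p
  show "p \<notin> pts (Suc M) \<Longrightarrow> ext_right M d p = p" using b(4)[of p] by (auto simp: ext_right_def pts_Suc)
  assume p: "p \<in> pts (Suc M)"
  have "ext_right M d p \<in> pts (Suc M) \<and> ext_right M d p \<noteq> p \<and> ext_right M d (ext_right M d p) = p"
  proof (cases "p \<in> pts M")
    case True
    have "p \<noteq> Top (M+1)" "p \<noteq> Bot (M+1)" "d p \<noteq> Top (M+1)" "d p \<noteq> Bot (M+1)"
      using True b(1)[OF True] n by auto
    thus ?thesis using True b(1)[OF True] b(2)[OF True] b(3)[of p] by (simp add: ext_right_def pts_Suc)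
  next
    case False
    hence "p = Top (M+1) \<or> p = Bot (M+1)" using p pts_Suc by auto
    thus ?thesis by (auto simp: ext_right_def)
  qed
  thus "ext_right M d p \<in> pts (Suc M)" "ext_right M d p \<noteq> p" "ext_right M d (ext_right M d p) = p"
    by auto
qed

lemma walled_chiD: "d \<in> walled r s \<Longrightarrow> d \<in> brauer (r+s) \<and> (\<forall>p\<in>pts (r+s). chi r (d p) \<noteq> chi r p)"
  by (simp add: walled_chi)
lemma walled_chiI: "d \<in> brauer (r+s) \<Longrightarrow> (\<forall>p\<in>pts (r+s). chi r (d p) \<noteq> chi r p) \<Longrightarrow> d \<in> walled r s"
  by (simp add: walled_chi)

lemma ext_right_walled: assumes d: "d \<in> walled r s" shows "ext_right (r+s) d \<in> walled r (s+1)"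
proof (rule walled_chiI)
  note w = walled_chiD[OF d]
  show "ext_right (r+s) d \<in> brauer (r + (s+1))" using ext_right_brauer[of d "r+s"] w by simp
  show "\<forall>p\<in>pts (r + (s + 1)). chi r (ext_right (r + s) d p) \<noteq> chi r p"
  proof
    fix p assume "p \<in> pts (r + (s + 1))"
    hence "p \<in> pts (r+s) \<or> p = Top (r+s+1) \<or> p = Bot (r+s+1)" using pts_Suc[of p "r+s"] by simp
    thus "chi r (ext_right (r + s) d p) \<noteq> chi r p"
    proof
      assume p: "p \<in> pts (r+s)"
      hence "p \<noteq> Top (r+s+1)" "p \<noteq> Bot (r+s+1)" by auto
      thus ?thesis using w p by (simp add: ext_right_def)
    qed (auto simp: ext_right_def chi_def)
  qed
qed

lemma part1_diag:
  assumes r: "1 \<le> r" and a: "a \<in> walled r (s+1)"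
  shows "\<exists>d \<in> walled r s. compose (Suc (r+s)) (ext_right (r+s) d) (e_diag (Suc (r+s)) 1 (Suc (r+s)))
              = compose (Suc (r+s)) a (e_diag (Suc (r+s)) 1 (Suc (r+s)))
       \<and> loops (Suc (r+s)) (ext_right (r+s) d) (e_diag (Suc (r+s)) 1 (Suc (r+s))) = 0"
proof -
  define M where "M = r + s"
  define m where "m = Suc M"
  have m2: "2 \<le> m" using r by (simp add: m_def M_def)
  note w = walled_chiD[OF a]
  have ab: "a \<in> brauer m" and ac: "\<forall>p\<in>pts m. chi r (a p) \<noteq> chi r p" using w by (simp_all add: m_def M_def)
  have c1: "chi r (Top 1) = True" "chi r (Top m) = False" "chi r (Bot m) = True"
    using r by (auto simp: chi_def m_def M_def)
  define H where "H = G m a"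
  have Hb: "H \<in> brauer m" using G_brauer[OF m2 ab] by (simp add: H_def)
  have H1: "H (Top 1) = Top m" using m2 by (simp add: H_def G_def)
  have Hm: "H (Top m) = Top 1" using m2 by (simp add: H_def G_def)
  have Hc: "\<forall>p\<in>pts m. chi r (H p) \<noteq> chi r p" unfolding H_def by (rule G_chi[OF m2 ab ac]) (use c1 in simp)
  note hb = brauerD[OF Hb]
  define u where "u = H (Bot m)"
  have bm: "Bot m \<in> pts m" using m2 by simp
  have u: "u \<in> pts m" "u \<noteq> Top 1" "u \<noteq> Top m"
  proof -
    show "u \<in> pts m" using hb(1)[OF bm] by (simp add: u_def)
    show "u \<noteq> Top 1" using hb(3)[of "Bot m"] H1 by (metis u_def pt.distinct(1))
    show "u \<noteq> Top m" using hb(3)[of "Bot m"] Hm by (metis u_def pt.distinct(1))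
  qed
  have cu: "chi r u \<noteq> chi r (Top 1)" using Hc bm c1 by (auto simp: u_def)
  define b where "b = swp m H u"
  have bb: "b \<in> brauer m" unfolding b_def by (rule swp_brauer[OF m2 Hb H1 u])
  have Gb: "G m b = H" unfolding b_def by (rule G_swp[OF m2 Hb H1 u])
  have b1: "b (Top 1) \<noteq> Top m" unfolding b_def by (rule swp_Top1[OF m2 Hb H1 u])
  have bc: "\<forall>p\<in>pts m. chi r (b p) \<noteq> chi r p" unfolding b_def
    by (rule swp_chi[OF m2 Hb H1 u Hc]) (use c1 cu in auto)
  have hu: "H u = Bot m" using hb(3) u_def by simp
  have bTm: "b (Top m) = Bot m" using sv(3)[OF m2 Hb H1 u] hu by (simp add: b_def)
  have bBm: "b (Bot m) = Top m" using sv(4)[OF m2 Hb H1 u] hu by (simp add: b_def)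
  note bbD = brauerD[OF bb]
  define d where "d = restr M b"
  have ext: "ext_right M d = b"
  proof
    fix p
    show "ext_right M d p = b p"
    proof (cases "p = Top m \<or> p = Bot m")
      case True thus ?thesis using bTm bBm by (auto simp: ext_right_def m_def)
    next
      case False
      hence "p \<noteq> Top (M+1)" "p \<noteq> Bot (M+1)" by (auto simp: m_def)
      moreover have "p \<notin> pts M \<Longrightarrow> b p = p" using bbD(4) False pts_Suc[of p M] by (auto simp: m_def)
      ultimately show ?thesis by (auto simp: ext_right_def d_def restr_def)
    qed
  qed
  have db: "d \<in> brauer M"
  proof (rule brauerI)
    fix p
    show "p \<notin> pts M \<Longrightarrow> d p = p" by (simp add: d_def restr_def)
    assume p: "p \<in> pts M"
    have pm: "p \<in> pts m" using p pts_Suc by (simp add: m_def)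
    have pn: "p \<noteq> Top m" "p \<noteq> Bot m" using p by (auto simp: m_def)
    have "b p \<noteq> Top m" "b p \<noteq> Bot m" using pn bbD(3)[of p] bTm bBm by metis+
    hence bp: "b p \<in> pts M" using bbD(1)[OF pm] pts_Suc[of "b p" M] by (simp add: m_def)
    show "d p \<in> pts M" "d p \<noteq> p" "d (d p) = p" using bp p bbD(2)[OF pm] bbD(3)[of p]
      by (simp_all add: d_def restr_def)
  qed
  have dw: "d \<in> walled r s"
  proof (rule walled_chiI)
    show "d \<in> brauer (r+s)" using db by (simp add: M_def)
    show "\<forall>p\<in>pts (r+s). chi r (d p) \<noteq> chi r p"
      using bc pts_Suc by (auto simp: d_def restr_def m_def M_def)
  qed
  have "compose m b (e_diag m 1 m) = compose m a (e_diag m 1 m)"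
    using compose_G[OF m2 bb] compose_G[OF m2 ab] Gb by (simp add: H_def)
  moreover have "loops m b (e_diag m 1 m) = 0" using loops_G[OF m2 bb] b1 by simp
  ultimately show ?thesis using dw ext by (auto simp: m_def M_def)
qed

lemma sd_su[simp]: "shift_down (shift_up p) = p" by (cases p) auto
lemma su_sd: "1 \<le> idx p \<Longrightarrow> shift_up (shift_down p) = p" by (cases p) auto
lemma idx_su[simp]: "idx (shift_up p) = Suc (idx p)" by (cases p) auto
lemma idx_sd[simp]: "idx (shift_down p) = idx p - 1" by (cases p) auto
lemma top_su[simp]: "is_top (shift_up p) = is_top p" by (cases p) auto
lemma top_sd[simp]: "is_top (shift_down p) = is_top p" by (cases p) auto
lemma su_inj[simp]: "shift_up p = shift_up q \<longleftrightarrow> p = q" by (metis sd_su)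
lemma su_pts: "p \<in> pts M \<Longrightarrow> shift_up p \<in> pts (Suc M)" by (simp add: pts_iff)
lemma chi_su: "chi (Suc r) (shift_up p) = chi r p" by (simp add: chi_def)
lemma chi_sd: "2 \<le> idx p \<Longrightarrow> chi r (shift_down p) = chi (Suc r) p" by (auto simp: chi_def)

lemma ext_left_brauer: assumes d: "d \<in> brauer M" shows "ext_left d \<in> brauer (Suc M)"
proof (rule brauerI)
  note b = brauerD[OF d]
  fix p
  show "p \<notin> pts (Suc M) \<Longrightarrow> ext_left d p = p"
  proof -
    assume p: "p \<notin> pts (Suc M)"
    show ?thesis
    proof (cases "2 \<le> idx p")
      case True
      hence "shift_down p \<notin> pts M" using p by (auto simp: pts_iff)
      hence "d (shift_down p) = shift_down p" using b(4) by auto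
      thus ?thesis using True p su_sd[of p] by (auto simp: ext_left_def)
    next
      case False thus ?thesis using p by (auto simp: ext_left_def)
    qed
  qed
  assume p: "p \<in> pts (Suc M)"
  have "ext_left d p \<in> pts (Suc M) \<and> ext_left d p \<noteq> p \<and> ext_left d (ext_left d p) = p"
  proof (cases "p = Top 1 \<or> p = Bot 1")
    case True thus ?thesis by (auto simp: ext_left_def)
  next
    case False
    hence i2: "2 \<le> idx p" using p by (cases p) (auto simp: pts_iff)
    define q where "q = shift_down p"
    have q: "q \<in> pts M" "p = shift_up q" using i2 p su_sd[of p] by (auto simp: q_def pts_iff)
    have e1: "ext_left d p = shift_up (d q)" using i2 False by (simp add: ext_left_def q_def)
    have dq: "d q \<in> pts M" "d q \<noteq> q" "d (d q) = q" using b q by auto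
    have ne: "shift_up (d q) \<noteq> Top 1" "shift_up (d q) \<noteq> Bot 1" "2 \<le> idx (shift_up (d q))"
      using dq(1) by (cases "d q", auto simp: pts_iff)+
    have "ext_left d (shift_up (d q)) = shift_up q" using ne dq(3) by (simp add: ext_left_def)
    thus ?thesis using e1 q dq su_pts by auto
  qed
  thus "ext_left d p \<in> pts (Suc M)" "ext_left d p \<noteq> p" "ext_left d (ext_left d p) = p" by auto
qed

lemma ext_left_walled: assumes d: "d \<in> walled r s" shows "ext_left d \<in> walled (r+1) s"
proof (rule walled_chiI)
  note w = walled_chiD[OF d]
  show "ext_left d \<in> brauer (r + 1 + s)" using ext_left_brauer[of d "r+s"] w by simp
  show "\<forall>p\<in>pts (r + 1 + s). chi (r+1) (ext_left d p) \<noteq> chi (r+1) p"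
  proof
    fix p assume p: "p \<in> pts (r + 1 + s)"
    show "chi (r+1) (ext_left d p) \<noteq> chi (r+1) p"
    proof (cases "p = Top 1 \<or> p = Bot 1")
      case True thus ?thesis by (auto simp: ext_left_def chi_def)
    next
      case False
      hence i2: "2 \<le> idx p" using p by (cases p) (auto simp: pts_iff)
      define q where "q = shift_down p"
      have q: "q \<in> pts (r+s)" "p = shift_up q" using i2 p su_sd[of p] by (auto simp: q_def pts_iff)
      have e1: "ext_left d p = shift_up (d q)" using i2 False by (simp add: ext_left_def q_def)
      show ?thesis using e1 q w chi_su by simp
    qed
  qed
qed

lemma part2_diag:
  assumes s: "1 \<le> s" and a: "a \<in> walled (r+1) s"
  shows "\<exists>d \<in> walled r s. compose (Suc (r+s)) (ext_left d) (e_diag (Suc (r+s)) 1 (Suc (r+s)))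
              = compose (Suc (r+s)) a (e_diag (Suc (r+s)) 1 (Suc (r+s)))
       \<and> loops (Suc (r+s)) (ext_left d) (e_diag (Suc (r+s)) 1 (Suc (r+s))) = 0"
proof -
  define M where "M = r + s"
  define m where "m = Suc M"
  have m2: "2 \<le> m" using s by (simp add: m_def M_def)
  note w = walled_chiD[OF a]
  have ab: "a \<in> brauer m" and ac: "\<forall>p\<in>pts m. chi (r+1) (a p) \<noteq> chi (r+1) p"
    using w by (simp_all add: m_def M_def)
  have c1: "chi (r+1) (Top 1) = True" "chi (r+1) (Top m) = False" "chi (r+1) (Bot 1) = False"
    using s by (auto simp: chi_def m_def M_def)
  define H where "H = G m a"
  have Hb: "H \<in> brauer m" using G_brauer[OF m2 ab] by (simp add: H_def)
  have H1: "H (Top 1) = Top m" using m2 by (simp add: H_def G_def)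
  have Hc: "\<forall>p\<in>pts m. chi (r+1) (H p) \<noteq> chi (r+1) p" unfolding H_def
    by (rule G_chi[OF m2 ab ac]) (use c1 in simp)
  define u where "u = Bot 1"
  have u: "u \<in> pts m" "u \<noteq> Top 1" "u \<noteq> Top m" using m2 by (auto simp: u_def)
  have cu: "chi (r+1) u \<noteq> chi (r+1) (Top 1)" using c1 by (simp add: u_def)
  define b where "b = swp m H u"
  have bb: "b \<in> brauer m" unfolding b_def by (rule swp_brauer[OF m2 Hb H1 u])
  have Gb: "G m b = H" unfolding b_def by (rule G_swp[OF m2 Hb H1 u])
  have b1: "b (Top 1) \<noteq> Top m" unfolding b_def by (rule swp_Top1[OF m2 Hb H1 u])
  have bc: "\<forall>p\<in>pts m. chi (r+1) (b p) \<noteq> chi (r+1) p" unfolding b_def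
    by (rule swp_chi[OF m2 Hb H1 u Hc]) (use c1 cu in auto)
  have bT1: "b (Top 1) = Bot 1" using sv(1)[OF m2 Hb H1 u] by (simp add: b_def u_def)
  have bB1: "b (Bot 1) = Top 1" using sv(2)[OF m2 Hb H1 u] by (simp add: b_def u_def)
  note bbD = brauerD[OF bb]
  define d where "d = (\<lambda>p. if p \<in> pts M then shift_down (b (shift_up p)) else p)"
  have bsu: "b (shift_up p) \<in> pts m \<and> 2 \<le> idx (b (shift_up p))" if p: "p \<in> pts M" for p
  proof -
    have sp: "shift_up p \<in> pts m" using p su_pts by (simp add: m_def)
    have "shift_up p \<noteq> Top 1" "shift_up p \<noteq> Bot 1" using p by (cases p, auto simp: pts_iff)+
    hence "b (shift_up p) \<noteq> Bot 1" "b (shift_up p) \<noteq> Top 1"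
      using bbD(3)[of "shift_up p"] bT1 bB1 by metis+
    moreover have "b (shift_up p) \<in> pts m" using bbD(1)[OF sp] .
    ultimately show ?thesis by (cases "b (shift_up p)") (auto simp: pts_iff)
  qed
  have ext: "ext_left d = b"
  proof
    fix p
    show "ext_left d p = b p"
    proof (cases "p = Top 1 \<or> p = Bot 1")
      case True thus ?thesis using bT1 bB1 by (auto simp: ext_left_def)
    next
      case nt: False
      show ?thesis
      proof (cases "2 \<le> idx p")
        case True
        show ?thesis
        proof (cases "p \<in> pts m")
          case True
          hence "shift_down p \<in> pts M" using \<open>2 \<le> idx p\<close> by (auto simp: pts_iff m_def)
          moreover have "shift_up (shift_down p) = p" using \<open>2 \<le> idx p\<close> su_sd by auto
          moreover have "1 \<le> idx (b p)" using bbD(1)[OF True] by (simp add: pts_iff)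
          ultimately show ?thesis using nt \<open>2 \<le> idx p\<close> su_sd[of "b p"] by (simp add: ext_left_def d_def)
        next
          case False
          hence "shift_down p \<notin> pts M" using \<open>2 \<le> idx p\<close> by (auto simp: pts_iff m_def)
          thus ?thesis using nt \<open>2 \<le> idx p\<close> su_sd[of p] bbD(4)[OF False] by (simp add: ext_left_def d_def)
        qed
      next
        case False
        hence "p \<notin> pts m" using nt by (cases p) (auto simp: pts_iff)
        thus ?thesis using False nt bbD(4) by (simp add: ext_left_def)
      qed
    qed
  qed
  have db: "d \<in> brauer M"
  proof (rule brauerI)
    fix p
    show "p \<notin> pts M \<Longrightarrow> d p = p" by (simp add: d_def)
    assume p: "p \<in> pts M"
    have sp: "shift_up p \<in> pts m" using p su_pts by (simp add: m_def)
    have bs: "b (shift_up p) \<in> pts m" "2 \<le> idx (b (shift_up p))" using bsu[OF p] by auto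
    have dp: "d p = shift_down (b (shift_up p))" using p by (simp add: d_def)
    show dpm: "d p \<in> pts M" using bs dp by (auto simp: pts_iff m_def)
    have r1: "shift_up (d p) = b (shift_up p)" using dp bs su_sd by auto
    show "d p \<noteq> p"
    proof
      assume "d p = p"
      hence "b (shift_up p) = shift_up p" using r1 by simp
      thus False using bbD(2)[OF sp] by simp
    qed
    show "d (d p) = p" using dpm r1 bbD(3)[of "shift_up p"] by (simp add: d_def)
  qed
  have dw: "d \<in> walled r s"
  proof (rule walled_chiI)
    show "d \<in> brauer (r+s)" using db by (simp add: M_def)
    show "\<forall>p\<in>pts (r+s). chi r (d p) \<noteq> chi r p"
    proof
      fix p assume p: "p \<in> pts (r+s)"
      hence pM: "p \<in> pts M" by (simp add: M_def)
      have sp: "shift_up p \<in> pts m" using pM su_pts by (simp add: m_def)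
      have "chi r (d p) = chi (Suc r) (b (shift_up p))" using bsu[OF pM] pM chi_sd by (simp add: d_def)
      also have "\<dots> \<noteq> chi (Suc r) (shift_up p)" using bc sp by auto
      also have "chi (Suc r) (shift_up p) = chi r p" by (rule chi_su)
      finally show "chi r (d p) \<noteq> chi r p" .
    qed
  qed
  have "compose m b (e_diag m 1 m) = compose m a (e_diag m 1 m)"
    using compose_G[OF m2 bb] compose_G[OF m2 ab] Gb by (simp add: H_def)
  moreover have "loops m b (e_diag m 1 m) = 0" using loops_G[OF m2 bb] b1 by simp
  ultimately show ?thesis using dw ext by (auto simp: m_def M_def)
qed



definition Kc :: "nat \<Rightarrow> 'a::comm_ring_1 \<Rightarrow> diagram \<Rightarrow> diagram \<Rightarrow> diagram \<Rightarrow> 'a" where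
  "Kc m \<delta> y b c = (if compose m b y = c then \<delta> ^ loops m b y else 0)"

lemma bm_basis:
  assumes y: "y \<in> brauer m"
  shows "bmult m \<delta> x (basis y) c = (\<Sum>a\<in>brauer m. x a * Kc m \<delta> y a c)"
proof -
  have "bmult m \<delta> x (basis y) c = (\<Sum>a\<in>brauer m. \<Sum>b\<in>brauer m.
      if b = y then (if compose m a y = c then x a * \<delta> ^ loops m a y else 0) else 0)"
    unfolding bmult_def by (intro sum.cong refl) (auto simp: basis_def)
  also have "\<dots> = (\<Sum>a\<in>brauer m. (if compose m a y = c then x a * \<delta> ^ loops m a y else 0))"
    by (intro sum.cong refl) (simp add: y brauer_finite sum.delta)
  also have "\<dots> = (\<Sum>a\<in>brauer m. x a * Kc m \<delta> y a c)"
    by (intro sum.cong refl) (simp add: Kc_def)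
  finally show ?thesis .
qed

lemma lin_ext_mult:
  assumes y: "y \<in> brauer m" and f: "f ` brauer M \<subseteq> brauer m"
  shows "bmult m \<delta> (lin_ext M f z) (basis y) c = (\<Sum>d\<in>brauer M. z d * Kc m \<delta> y (f d) c)"
proof -
  have "bmult m \<delta> (lin_ext M f z) (basis y) c
     = (\<Sum>b\<in>brauer m. \<Sum>d\<in>brauer M. if f d = b then z d * Kc m \<delta> y b c else 0)"
    unfolding bm_basis[OF y] lin_ext_def sum_distrib_right
    by (intro sum.cong refl) auto
  also have "\<dots> = (\<Sum>d\<in>brauer M. \<Sum>b\<in>brauer m. if f d = b then z d * Kc m \<delta> y b c else 0)"
    by (rule sum.swap)
  also have "\<dots> = (\<Sum>d\<in>brauer M. z d * Kc m \<delta> y (f d) c)"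
  proof (intro sum.cong refl)
    fix d assume "d \<in> brauer M"
    hence "f d \<in> brauer m" using f by auto
    thus "(\<Sum>b\<in>brauer m. if f d = b then z d * Kc m \<delta> y b c else 0) = z d * Kc m \<delta> y (f d) c"
      using brauer_finite by (simp add: sum.delta)
  qed
  finally show ?thesis .
qed

definition alg :: "diagram set \<Rightarrow> ('a::comm_ring_1) elem set" where
  "alg W = {x. \<forall>d. x d \<noteq> 0 \<longrightarrow> d \<in> W}"

lemma walled_alg_eq: "walled_alg r s = alg (walled r s)"
  unfolding walled_alg_def alg_def brauer_alg_def walled_def by auto

lemma generic:
  fixes \<delta> :: "'a::comm_ring_1"
  assumes y: "y \<in> brauer m" and f: "f ` brauer M \<subseteq> brauer m" and fW: "f ` W0 \<subseteq> W1"
    and W1: "W1 \<subseteq> brauer m" and W0: "W0 \<subseteq> brauer M"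
    and red: "\<forall>a\<in>W1. \<exists>d\<in>W0. compose m (f d) y = compose m a y \<and> loops m (f d) y = 0"
  shows "{bmult m \<delta> x (basis y) | x. x \<in> alg W1} = {bmult m \<delta> (lin_ext M f x) (basis y) | x. x \<in> alg W0}"
proof (rule set_eqI, rule iffI)
  fix v assume "v \<in> {bmult m \<delta> (lin_ext M f x) (basis y) | x. x \<in> alg W0}"
  then obtain x where v: "v = bmult m \<delta> (lin_ext M f x) (basis y)" and x: "x \<in> alg W0" by blast
  have "lin_ext M f x \<in> alg W1"
    unfolding alg_def
  proof (intro CollectI allI impI)
    fix b assume "lin_ext M f x b \<noteq> (0::'a)"
    hence "\<exists>d\<in>brauer M. (if f d = b then x d else 0) \<noteq> 0"
      unfolding lin_ext_def using sum.neutral[of "brauer M" "\<lambda>d. if f d = b then x d else 0"] by blast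
    then obtain d where "d \<in> brauer M" "f d = b" "x d \<noteq> 0" by (auto split: if_splits)
    thus "b \<in> W1" using x fW unfolding alg_def by auto
  qed
  thus "v \<in> {bmult m \<delta> x (basis y) | x. x \<in> alg W1}" using v by blast
next
  fix v assume "v \<in> {bmult m \<delta> x (basis y) | x. x \<in> alg W1}"
  then obtain x where v: "v = bmult m \<delta> x (basis y)" and x: "x \<in> alg W1" by blast
  define F where "F a = (SOME d. d \<in> W0 \<and> compose m (f d) y = compose m a y \<and> loops m (f d) y = 0)" for a
  have F: "F a \<in> W0 \<and> compose m (f (F a)) y = compose m a y \<and> loops m (f (F a)) y = 0" if "a \<in> W1" for a
  proof -
    from red that obtain d where d: "d \<in> W0 \<and> compose m (f d) y = compose m a y \<and> loops m (f d) y = 0" by blast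
    show ?thesis
      using someI[where P="\<lambda>d. d \<in> W0 \<and> compose m (f d) y = compose m a y \<and> loops m (f d) y = 0", OF d]
      unfolding F_def .
  qed
  have fin1: "finite W1" using W1 brauer_finite finite_subset by blast
  define z where "z d = (\<Sum>a\<in>W1. if F a = d then x a * \<delta> ^ loops m a y else 0)" for d
  have z: "z \<in> alg W0"
    unfolding alg_def
  proof (intro CollectI allI impI)
    fix d assume "z d \<noteq> 0"
    hence "\<exists>a\<in>W1. (if F a = d then x a * \<delta> ^ loops m a y else 0) \<noteq> 0"
      unfolding z_def using sum.neutral[of W1 "\<lambda>a. if F a = d then x a * \<delta> ^ loops m a y else 0"] by blast
    then obtain a where "a \<in> W1" "F a = d" by (auto split: if_splits)
    thus "d \<in> W0" using F by auto
  qed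
  have "bmult m \<delta> (lin_ext M f z) (basis y) = v"
  proof
    fix c
    have "bmult m \<delta> (lin_ext M f z) (basis y) c = (\<Sum>d\<in>brauer M. z d * Kc m \<delta> y (f d) c)"
      by (rule lin_ext_mult[OF y f])
    also have "\<dots> = (\<Sum>d\<in>brauer M. \<Sum>a\<in>W1. if F a = d then x a * \<delta> ^ loops m a y * Kc m \<delta> y (f d) c else 0)"
      unfolding z_def sum_distrib_right by (intro sum.cong refl) auto
    also have "\<dots> = (\<Sum>a\<in>W1. \<Sum>d\<in>brauer M. if F a = d then x a * \<delta> ^ loops m a y * Kc m \<delta> y (f d) c else 0)"
      by (rule sum.swap)
    also have "\<dots> = (\<Sum>a\<in>W1. x a * Kc m \<delta> y a c)"
    proof (intro sum.cong refl)
      fix a assume a: "a \<in> W1"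
      have Fa: "F a \<in> brauer M" using F[OF a] W0 by auto
      have "(\<Sum>d\<in>brauer M. if F a = d then x a * \<delta> ^ loops m a y * Kc m \<delta> y (f d) c else 0)
          = x a * \<delta> ^ loops m a y * Kc m \<delta> y (f (F a)) c"
        using Fa brauer_finite by (simp add: sum.delta)
      also have "\<dots> = x a * Kc m \<delta> y a c" using F[OF a] by (simp add: Kc_def)
      finally show "(\<Sum>d\<in>brauer M. if F a = d then x a * \<delta> ^ loops m a y * Kc m \<delta> y (f d) c else 0)
          = x a * Kc m \<delta> y a c" .
    qed
    also have "\<dots> = (\<Sum>a\<in>brauer m. x a * Kc m \<delta> y a c)"
      using x W1 brauer_finite unfolding alg_def by (intro sum.mono_neutral_left) (auto, metis mult_zero_left)
    also have "\<dots> = v c" unfolding v by (rule bm_basis[OF y, symmetric])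
    finally show "bmult m \<delta> (lin_ext M f z) (basis y) c = v c" .
  qed
  thus "v \<in> {bmult m \<delta> (lin_ext M f x) (basis y) | x. x \<in> alg W0}" using z by blast
qed

theorem mainTheorem14:
  fixes \<delta> :: "'a::comm_ring_1" and r s :: nat
  shows "(1 \<le> r \<longrightarrow>
      {bmult (r + s + 1) \<delta> x (basis (e_diag (r + s + 1) 1 (r + s + 1))) | x.
          x \<in> walled_alg r (s + 1)}
    = {bmult (r + s + 1) \<delta> (iota r s x) (basis (e_diag (r + s + 1) 1 (r + s + 1))) | x.
          x \<in> walled_alg r s})
   \<and> (1 \<le> s \<longrightarrow>
      {bmult (r + s + 1) \<delta> x (basis (e_diag (r + s + 1) 1 (r + s + 1))) | x.
          x \<in> walled_alg (r + 1) s}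
    = {bmult (r + s + 1) \<delta> (iota' r s x) (basis (e_diag (r + s + 1) 1 (r + s + 1))) | x.
          x \<in> walled_alg r s})"
proof -
  have ms: "r + s + 1 = Suc (r + s)" by simp
  have W0: "walled r s \<subseteq> brauer (r + s)" by (auto simp: walled_def)
  show ?thesis
    unfolding ms walled_alg_eq iota_def iota'_def
  proof (intro conjI impI)
    assume r: "1 \<le> r"
    show "{bmult (Suc (r + s)) \<delta> x (basis (e_diag (Suc (r + s)) 1 (Suc (r + s)))) | x. x \<in> alg (walled r (s + 1))} =
      {bmult (Suc (r + s)) \<delta> (lin_ext (r + s) (ext_right (r + s)) x) (basis (e_diag (Suc (r + s)) 1 (Suc (r + s)))) |x.
       x \<in> alg (walled r s)}"
    proof (rule generic)
      show "e_diag (Suc (r + s)) 1 (Suc (r + s)) \<in> brauer (Suc (r + s))" using r by (intro e_brauer) auto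
      show "ext_right (r + s) ` brauer (r + s) \<subseteq> brauer (Suc (r + s))" using ext_right_brauer by blast
      show "ext_right (r + s) ` walled r s \<subseteq> walled r (s + 1)" using ext_right_walled by blast
      show "walled r (s + 1) \<subseteq> brauer (Suc (r + s))" by (auto simp: walled_def)
      show "walled r s \<subseteq> brauer (r + s)" by (rule W0)
      show "\<forall>a\<in>walled r (s + 1). \<exists>d\<in>walled r s.
        compose (Suc (r + s)) (ext_right (r + s) d) (e_diag (Suc (r + s)) 1 (Suc (r + s))) =
        compose (Suc (r + s)) a (e_diag (Suc (r + s)) 1 (Suc (r + s))) \<and>
        loops (Suc (r + s)) (ext_right (r + s) d) (e_diag (Suc (r + s)) 1 (Suc (r + s))) = 0"
        using part1_diag[OF r] by blast
    qed
  next
    assume s: "1 \<le> s"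
    show "{bmult (Suc (r + s)) \<delta> x (basis (e_diag (Suc (r + s)) 1 (Suc (r + s)))) | x. x \<in> alg (walled (r + 1) s)} =
      {bmult (Suc (r + s)) \<delta> (lin_ext (r + s) ext_left x) (basis (e_diag (Suc (r + s)) 1 (Suc (r + s)))) |x.
       x \<in> alg (walled r s)}"
    proof (rule generic)
      show "e_diag (Suc (r + s)) 1 (Suc (r + s)) \<in> brauer (Suc (r + s))" using s by (intro e_brauer) auto
      show "ext_left ` brauer (r + s) \<subseteq> brauer (Suc (r + s))" using ext_left_brauer by blast
      show "ext_left ` walled r s \<subseteq> walled (r + 1) s" using ext_left_walled by blast
      show "walled (r + 1) s \<subseteq> brauer (Suc (r + s))" by (auto simp: walled_def)
      show "walled r s \<subseteq> brauer (r + s)" by (rule W0)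
      show "\<forall>a\<in>walled (r + 1) s. \<exists>d\<in>walled r s.
        compose (Suc (r + s)) (ext_left d) (e_diag (Suc (r + s)) 1 (Suc (r + s))) =
        compose (Suc (r + s)) a (e_diag (Suc (r + s)) 1 (Suc (r + s))) \<and>
        loops (Suc (r + s)) (ext_left d) (e_diag (Suc (r + s)) 1 (Suc (r + s))) = 0"
        using part2_diag[OF s] by blast
    qed
  qed
qed


end
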